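(* Let $p$ be a design on a set $\Omega\subseteq\{0,1\}^n$ of treatment vectors, with $p(\mathbf z)=P(\mathbf Z=\mathbf z)$. Each unit $i$ has exposure levels $\mathcal E_i=\{0,\dots,K_i-1\}$ and exposure $e_i=f(\mathbf z_{N_i})$, and potential outcomes $Y_i(z,e)$, $(z,e)\in\{0,1\}\times\mathcal E_i$. Fix $(z_1,e_1)\ne(z_0,e_0)$ in $\{0,1\}\times\mathcal E_i$ for all $i$, and let $\theta=\frac1n\sum_i\big(Y_i(z_1,e_1)-Y_i(z_0,e_0)\big)$. For each unit $i$ and $(z,e)$ let $\Omega_i(z,e)=\{\mathbf z\in\Omega:z_i=z,\ f(\mathbf z_{N_i})=e\}$ and $\pi_i(z,e)=\sum_{\mathbf z\in\Omega_i(z,e)}p(\mathbf z)$. Let weight functions $w_i:\Omega\to\mathbb R$ be given and $\hat\theta=\sum_iw_i(\mathbf Z)Y_i^{obs}$. Then $\mathbb E[\hat\theta]=\theta$ holds for every choice of the real numbers $\{Y_i(z,e)\}$ if and only if $0<\pi_i(z_1,e_1)<1$ and $0<\pi_i(z_0,e_0)<1$ for all $i$, and the weights satisfy, for all $i=1,\dots,n$, $$\sum_{\mathbf z\in\Omega_i(z_1,e_1)}w_i(\mathbf z)p(\mathbf z)=\frac1n,\qquad \sum_{\mathbf z\in\Omega_i(z_0,e_0)}w_i(\mathbf z)p(\mathbf z)=-\frac1n,$$ $$\sum_{\mathbf z\in\Omega_i(z,e)}w_i(\mathbf z)p(\mathbf z)=0\quad\text{for all }(z,e)\notin\{(z_0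,e_0),(z_1,e_1)\}.$$
   Context: Units $1,\dots,n$ each have an interference neighborhood $N_i\subseteq\{1,\dots,n\}\setminus\{i\}$ (e.g. induced by an interference graph) and an exposure function $f$ mapping $\{0,1\}^{N_i}$ onto $\mathcal E_i$. The observed outcome is $Y_i^{obs}=Y_i(Z_i,f(\mathbf Z_{N_i}))$. "No structural assumptions" means unbiasedness must hold for every table of potential outcomes. *)

theory Defs
  imports Complex_Main
begin

text \<open>Units are 0,...,n-1. A treatment vector in {0,1}^n is a function nat => nat
  with values in {0,1} on the units and value 0 elsewhere (extensional).\<close>
definition treatment_vectors :: "nat \<Rightarrow> (nat \<Rightarrow> nat) set" where
  "treatment_vectors n = {z. (\<forall>i<n. z i \<le> 1) \<and> (\<forall>i. n \<le> i \<longrightarrow> z i = 0)}"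

definition Omega_i :: "(nat \<Rightarrow> nat) set \<Rightarrow> (nat \<Rightarrow> (nat \<Rightarrow> nat) \<Rightarrow> nat)
    \<Rightarrow> nat \<Rightarrow> nat \<Rightarrow> nat \<Rightarrow> (nat \<Rightarrow> nat) set" where
  "Omega_i \<Omega> f i z e = {zz \<in> \<Omega>. zz i = z \<and> f i zz = e}"

definition pi_i :: "(nat \<Rightarrow> nat) set \<Rightarrow> ((nat \<Rightarrow> nat) \<Rightarrow> real) \<Rightarrow> (nat \<Rightarrow> (nat \<Rightarrow> nat) \<Rightarrow> nat)
    \<Rightarrow> nat \<Rightarrow> nat \<Rightarrow> nat \<Rightarrow> real" where
  "pi_i \<Omega> p f i z e = (\<Sum>zz\<in>Omega_i \<Omega> f i z e. p zz)"

definition expected_estimate :: "nat \<Rightarrow> (nat \<Rightarrow> nat) set \<Rightarrow> ((nat \<Rightarrow> nat) \<Rightarrow> real)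
    \<Rightarrow> (nat \<Rightarrow> (nat \<Rightarrow> nat) \<Rightarrow> nat) \<Rightarrow> (nat \<Rightarrow> (nat \<Rightarrow> nat) \<Rightarrow> real)
    \<Rightarrow> (nat \<Rightarrow> nat \<Rightarrow> nat \<Rightarrow> real) \<Rightarrow> real" where
  "expected_estimate n \<Omega> p f w Y =
     (\<Sum>zz\<in>\<Omega>. p zz * (\<Sum>i<n. w i zz * Y i (zz i) (f i zz)))"

definition estimand :: "nat \<Rightarrow> (nat \<Rightarrow> nat \<Rightarrow> nat \<Rightarrow> real) \<Rightarrow> nat \<Rightarrow> nat \<Rightarrow> nat \<Rightarrow> nat \<Rightarrow> real" where
  "estimand n Y z1 e1 z0 e0 = (1 / real n) * (\<Sum>i<n. Y i z1 e1 - Y i z0 e0)"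

end

theory Submission
  imports Defs
begin


lemma tv_finite: "finite (treatment_vectors n)"
proof -
  have "treatment_vectors n \<subseteq> (\<lambda>xs i. if i < n then xs ! i else 0) ` {xs. set xs \<subseteq> {..1::nat} \<and> length xs = n}"
  proof
    fix z assume z: "z \<in> treatment_vectors n"
    show "z \<in> (\<lambda>xs i. if i < n then xs ! i else 0) ` {xs. set xs \<subseteq> {..1::nat} \<and> length xs = n}"
    proof
      show "z = (\<lambda>i. if i < n then map z [0..<n] ! i else 0)"
        using z by (auto simp: treatment_vectors_def fun_eq_iff)
      show "map z [0..<n] \<in> {xs. set xs \<subseteq> {..1::nat} \<and> length xs = n}"
        using z by (auto simp: treatment_vectors_def)
    qed
  qed
  moreover have "finite {xs. set xs \<subseteq> {..1::nat} \<and> length xs = n}"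
    by (rule finite_lists_length_eq) simp
  ultimately show ?thesis by (meson finite_imageI finite_subset)
qed

theorem theorem3:
  fixes n :: nat
    and \<Omega> :: "(nat \<Rightarrow> nat) set"
    and p :: "(nat \<Rightarrow> nat) \<Rightarrow> real"
    and N :: "nat \<Rightarrow> nat set"
    and K :: "nat \<Rightarrow> nat"
    and f :: "nat \<Rightarrow> (nat \<Rightarrow> nat) \<Rightarrow> nat"
    and w :: "nat \<Rightarrow> (nat \<Rightarrow> nat) \<Rightarrow> real"
    and z1 e1 z0 e0 :: nat
  assumes n_pos: "n \<ge> 1"
    and \<Omega>_sub: "\<Omega> \<subseteq> treatment_vectors n"
    and p_nonneg: "\<forall>zz\<in>\<Omega>. p zz \<ge> 0"
    and p_sum: "(\<Sum>zz\<in>\<Omega>. p zz) = 1"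
    and N_sub: "\<forall>i<n. N i \<subseteq> {0..<n} - {i}"
    and f_local: "\<forall>i<n. \<forall>zz zz'. (\<forall>j\<in>N i. zz j = zz' j) \<longrightarrow> f i zz = f i zz'"
    and f_range: "\<forall>i<n. \<forall>zz\<in>treatment_vectors n. f i zz < K i"
    and f_onto: "\<forall>i<n. \<forall>e<K i. \<exists>zz\<in>treatment_vectors n. f i zz = e"
    and z1_bin: "z1 \<le> 1" and z0_bin: "z0 \<le> 1"
    and e_lvl: "\<forall>i<n. e1 < K i \<and> e0 < K i"
    and distinct: "(z1, e1) \<noteq> (z0, e0)"
  shows "(\<forall>Y. expected_estimate n \<Omega> p f w Y = estimand n Y z1 e1 z0 e0) \<longleftrightarrow>
    ((\<forall>i<n. 0 < pi_i \<Omega> p f i z1 e1 \<and> pi_i \<Omega> p f i z1 e1 < 1 \<and>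
            0 < pi_i \<Omega> p f i z0 e0 \<and> pi_i \<Omega> p f i z0 e0 < 1) \<and>
     (\<forall>i<n. (\<Sum>zz\<in>Omega_i \<Omega> f i z1 e1. w i zz * p zz) = 1 / real n \<and>
            (\<Sum>zz\<in>Omega_i \<Omega> f i z0 e0. w i zz * p zz) = - (1 / real n) \<and>
            (\<forall>z\<le>1. \<forall>e<K i. (z, e) \<notin> {(z0, e0), (z1, e1)} \<longrightarrow>
               (\<Sum>zz\<in>Omega_i \<Omega> f i z e. w i zz * p zz) = 0)))"
proof -
  have finO: "finite \<Omega>" using \<Omega>_sub tv_finite finite_subset by blast
  define c where "c i a b = (\<Sum>zz\<in>Omega_i \<Omega> f i a b. w i zz * p zz)" for i a b
  define t where "t a b = (if (a, b) = (z1, e1) then 1 / real n else 0)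
      - (if (a, b) = (z0, e0) then 1 / real n else 0)" for a b
  have finOi: "finite (Omega_i \<Omega> f i a b)" for i a b
    using finO by (simp add: Omega_i_def)
  have ind: "expected_estimate n \<Omega> p f w (\<lambda>j a' b'. if j = i \<and> a' = a \<and> b' = b then 1 else 0) = c i a b"
    if i: "i < n" for i a b
  proof -
    have "expected_estimate n \<Omega> p f w (\<lambda>j a' b'. if j = i \<and> a' = a \<and> b' = b then 1 else 0)
        = (\<Sum>zz\<in>\<Omega>. (if zz i = a \<and> f i zz = b then w i zz * p zz else 0))"
      unfolding expected_estimate_def
    proof (rule sum.cong[OF refl])
      fix zz
      have "(\<Sum>j<n. w j zz * (if j = i \<and> zz j = a \<and> f j zz = b then 1 else 0))
          = (\<Sum>j<n. if j = i then w j zz * (if zz j = a \<and> f j zz = b then 1 else 0) else 0)"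
        by (rule sum.cong) auto
      also have "\<dots> = w i zz * (if zz i = a \<and> f i zz = b then 1 else 0)"
        using i by (simp add: sum.delta)
      finally show "p zz * (\<Sum>j<n. w j zz * (if j = i \<and> zz j = a \<and> f j zz = b then 1 else 0))
          = (if zz i = a \<and> f i zz = b then w i zz * p zz else 0)" by simp
    qed
    also have "\<dots> = c i a b"
      unfolding c_def Omega_i_def using finO by (simp add: sum.inter_filter)
    finally show ?thesis .
  qed
  have ind_est: "estimand n (\<lambda>j a' b'. if j = i \<and> a' = a \<and> b' = b then 1 else 0) z1 e1 z0 e0 = t a b"
    if i: "i < n" for i a b
  proof -
    have "(\<Sum>j<n. (if j = i \<and> z1 = a \<and> e1 = b then 1 else 0) - (if j = i \<and> z0 = a \<and> e0 = b then 1 else (0::real)))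
       = (\<Sum>j<n. if j = i then (if z1 = a \<and> e1 = b then 1 else 0) - (if z0 = a \<and> e0 = b then 1 else (0::real)) else 0)"
      by (rule sum.cong) auto
    also have "\<dots> = (if z1 = a \<and> e1 = b then 1 else 0) - (if z0 = a \<and> e0 = b then 1 else (0::real))"
      using i by (simp add: sum.delta)
    finally have e: "estimand n (\<lambda>j a' b'. if j = i \<and> a' = a \<and> b' = b then 1 else 0) z1 e1 z0 e0
        = (1 / real n) * ((if z1 = a \<and> e1 = b then 1 else 0) - (if z0 = a \<and> e0 = b then 1 else (0::real)))"
      unfolding estimand_def by simp
    show ?thesis unfolding e t_def by (auto simp: right_diff_distrib)
  qed
  have decomp: "expected_estimate n \<Omega> p f w Y = (\<Sum>i<n. \<Sum>ab\<in>{..1::nat} \<times> {..<K i}. Y i (fst ab) (snd ab) * c i (fst ab) (snd ab))" for Y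
  proof -
    have "expected_estimate n \<Omega> p f w Y = (\<Sum>i<n. \<Sum>zz\<in>\<Omega>. p zz * w i zz * Y i (zz i) (f i zz))"
      unfolding expected_estimate_def by (subst sum.swap) (simp add: sum_distrib_left mult.assoc)
    also have "\<dots> = (\<Sum>i<n. \<Sum>ab\<in>{..1::nat} \<times> {..<K i}. Y i (fst ab) (snd ab) * c i (fst ab) (snd ab))"
    proof (rule sum.cong[OF refl])
      fix i assume "i \<in> {..<n}"
      then have i: "i < n" by simp
      have img: "(\<lambda>zz. (zz i, f i zz)) ` \<Omega> \<subseteq> {..1::nat} \<times> {..<K i}"
        using \<Omega>_sub f_range i by (auto simp: treatment_vectors_def)
      have "(\<Sum>zz\<in>\<Omega>. p zz * w i zz * Y i (zz i) (f i zz))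
          = (\<Sum>ab\<in>{..1::nat} \<times> {..<K i}. \<Sum>zz\<in>{zz\<in>\<Omega>. (zz i, f i zz) = ab}. p zz * w i zz * Y i (zz i) (f i zz))"
        by (rule sum.group[OF finO _ img, symmetric]) simp
      also have "\<dots> = (\<Sum>ab\<in>{..1::nat} \<times> {..<K i}. Y i (fst ab) (snd ab) * c i (fst ab) (snd ab))"
      proof (rule sum.cong[OF refl])
        fix ab :: "nat \<times> nat"
        obtain a b where ab: "ab = (a, b)" by fastforce
        have "(\<Sum>zz\<in>{zz\<in>\<Omega>. (zz i, f i zz) = ab}. p zz * w i zz * Y i (zz i) (f i zz))
            = (\<Sum>zz\<in>Omega_i \<Omega> f i a b. Y i a b * (w i zz * p zz))"
          unfolding ab Omega_i_def by (rule sum.cong) auto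
        then show "(\<Sum>zz\<in>{zz\<in>\<Omega>. (zz i, f i zz) = ab}. p zz * w i zz * Y i (zz i) (f i zz))
            = Y i (fst ab) (snd ab) * c i (fst ab) (snd ab)"
          by (simp add: ab c_def sum_distrib_left)
      qed
      finally show "(\<Sum>zz\<in>\<Omega>. p zz * w i zz * Y i (zz i) (f i zz)) = (\<Sum>ab\<in>{..1::nat} \<times> {..<K i}. Y i (fst ab) (snd ab) * c i (fst ab) (snd ab))" .
    qed
    finally show ?thesis .
  qed
  have pipos: "0 < pi_i \<Omega> p f i a b" if "c i a b \<noteq> 0" for i a b
  proof -
    have "\<exists>zz\<in>Omega_i \<Omega> f i a b. w i zz * p zz \<noteq> 0"
      using that unfolding c_def by (meson sum.neutral)
    then obtain zz where zz: "zz \<in> Omega_i \<Omega> f i a b" "p zz \<noteq> 0" by auto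
    have nn: "\<forall>x\<in>Omega_i \<Omega> f i a b. 0 \<le> p x" using p_nonneg by (auto simp: Omega_i_def)
    have "p zz \<le> pi_i \<Omega> p f i a b" unfolding pi_i_def
      using member_le_sum[OF zz(1) _ finOi] nn by auto
    moreover have "p zz > 0" using zz nn by force
    ultimately show ?thesis by linarith
  qed
  have pisum: "pi_i \<Omega> p f i z1 e1 + pi_i \<Omega> p f i z0 e0 \<le> 1" for i
  proof -
    have disj: "Omega_i \<Omega> f i z1 e1 \<inter> Omega_i \<Omega> f i z0 e0 = {}"
      using distinct by (auto simp: Omega_i_def)
    have "pi_i \<Omega> p f i z1 e1 + pi_i \<Omega> p f i z0 e0 = (\<Sum>zz\<in>Omega_i \<Omega> f i z1 e1 \<union> Omega_i \<Omega> f i z0 e0. p zz)"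
      unfolding pi_i_def by (rule sum.union_disjoint[symmetric]) (use finOi disj in auto)
    also have "\<dots> \<le> (\<Sum>zz\<in>\<Omega>. p zz)"
      by (rule sum_mono2[OF finO]) (use p_nonneg in \<open>auto simp: Omega_i_def\<close>)
    finally show ?thesis using p_sum by simp
  qed
  have npos: "1 / real n \<noteq> 0" using n_pos by simp
  show ?thesis
  proof
    assume H: "\<forall>Y. expected_estimate n \<Omega> p f w Y = estimand n Y z1 e1 z0 e0"
    have cc: "c i a b = t a b" if "i < n" for i a b
      using H ind[OF that] ind_est[OF that] by metis
    have c1: "c i z1 e1 = 1 / real n" if "i < n" for i using cc[OF that, of z1 e1] cc[OF that, of z0 e0] distinct by (auto simp: t_def)
    have c0: "c i z0 e0 = - (1 / real n)" if "i < n" for i using cc[OF that, of z1 e1] cc[OF that, of z0 e0] distinct by (auto simp: t_def)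
    show "(\<forall>i<n. 0 < pi_i \<Omega> p f i z1 e1 \<and> pi_i \<Omega> p f i z1 e1 < 1 \<and>
            0 < pi_i \<Omega> p f i z0 e0 \<and> pi_i \<Omega> p f i z0 e0 < 1) \<and>
     (\<forall>i<n. (\<Sum>zz\<in>Omega_i \<Omega> f i z1 e1. w i zz * p zz) = 1 / real n \<and>
            (\<Sum>zz\<in>Omega_i \<Omega> f i z0 e0. w i zz * p zz) = - (1 / real n) \<and>
            (\<forall>z\<le>1. \<forall>e<K i. (z, e) \<notin> {(z0, e0), (z1, e1)} \<longrightarrow>
               (\<Sum>zz\<in>Omega_i \<Omega> f i z e. w i zz * p zz) = 0))"
    proof (intro conjI allI impI)
      fix i assume i: "i < n"
      have p1: "0 < pi_i \<Omega> p f i z1 e1" using pipos c1[OF i] npos by simp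
      have p0: "0 < pi_i \<Omega> p f i z0 e0" using pipos c0[OF i] npos by simp
      show "0 < pi_i \<Omega> p f i z1 e1" by (rule p1)
      show "0 < pi_i \<Omega> p f i z0 e0" by (rule p0)
      show "pi_i \<Omega> p f i z1 e1 < 1" using p0 pisum[of i] by linarith
      show "pi_i \<Omega> p f i z0 e0 < 1" using p1 pisum[of i] by linarith
      show "(\<Sum>zz\<in>Omega_i \<Omega> f i z1 e1. w i zz * p zz) = 1 / real n" using c1[OF i] by (simp add: c_def)
      show "(\<Sum>zz\<in>Omega_i \<Omega> f i z0 e0. w i zz * p zz) = - (1 / real n)" using c0[OF i] by (simp add: c_def)
    next
      fix i z e assume i: "i < n" and "z \<le> 1" "e < K i" and ne: "(z, e) \<notin> {(z0, e0), (z1, e1)}"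
      show "(\<Sum>zz\<in>Omega_i \<Omega> f i z e. w i zz * p zz) = 0"
        using cc[OF i, of z e] ne by (auto simp: c_def t_def)
    qed
  next
    assume H: "(\<forall>i<n. 0 < pi_i \<Omega> p f i z1 e1 \<and> pi_i \<Omega> p f i z1 e1 < 1 \<and>
            0 < pi_i \<Omega> p f i z0 e0 \<and> pi_i \<Omega> p f i z0 e0 < 1) \<and>
     (\<forall>i<n. (\<Sum>zz\<in>Omega_i \<Omega> f i z1 e1. w i zz * p zz) = 1 / real n \<and>
            (\<Sum>zz\<in>Omega_i \<Omega> f i z0 e0. w i zz * p zz) = - (1 / real n) \<and>
            (\<forall>z\<le>1. \<forall>e<K i. (z, e) \<notin> {(z0, e0), (z1, e1)} \<longrightarrow>
               (\<Sum>zz\<in>Omega_i \<Omega> f i z e. w i zz * p zz) = 0))"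
    show "\<forall>Y. expected_estimate n \<Omega> p f w Y = estimand n Y z1 e1 z0 e0"
    proof
      fix Y
      have "expected_estimate n \<Omega> p f w Y = (\<Sum>i<n. \<Sum>ab\<in>{..1::nat} \<times> {..<K i}. Y i (fst ab) (snd ab) * c i (fst ab) (snd ab))"
        by (rule decomp)
      also have "\<dots> = (\<Sum>i<n. Y i z1 e1 / real n - Y i z0 e0 / real n)"
      proof (rule sum.cong[OF refl])
        fix i assume "i \<in> {..<n}"
        then have i: "i < n" by simp
        have m1: "(z1, e1) \<in> {..1::nat} \<times> {..<K i}" using z1_bin e_lvl i by auto
        have m0: "(z0, e0) \<in> {..1::nat} \<times> {..<K i}" using z0_bin e_lvl i by auto
        have "(\<Sum>ab\<in>{..1::nat} \<times> {..<K i}. Y i (fst ab) (snd ab) * c i (fst ab) (snd ab))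
            = (\<Sum>ab\<in>{..1::nat} \<times> {..<K i}. (if ab = (z1, e1) then Y i z1 e1 / real n else 0)
                 - (if ab = (z0, e0) then Y i z0 e0 / real n else 0))"
        proof (rule sum.cong[OF refl])
          fix ab assume ab: "ab \<in> {..1::nat} \<times> {..<K i}"
          obtain a b where abe: "ab = (a, b)" by fastforce
          show "Y i (fst ab) (snd ab) * c i (fst ab) (snd ab) = (if ab = (z1, e1) then Y i z1 e1 / real n else 0)
                 - (if ab = (z0, e0) then Y i z0 e0 / real n else 0)"
            using H i ab distinct unfolding abe c_def by auto
        qed
        also have "\<dots> = Y i z1 e1 / real n - Y i z0 e0 / real n"
          using m1 m0 by (simp add: sum_subtractf sum.delta')
        finally show "(\<Sum>ab\<in>{..1::nat} \<times> {..<K i}. Y i (fst ab) (snd ab) * c i (fst ab) (snd ab))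
           = Y i z1 e1 / real n - Y i z0 e0 / real n" .
      qed
      also have "\<dots> = estimand n Y z1 e1 z0 e0"
        unfolding estimand_def by (simp add: sum_divide_distrib diff_divide_distrib)
      finally show "expected_estimate n \<Omega> p f w Y = estimand n Y z1 e1 z0 e0" .
    qed
  qed
qed

end
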